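(* Let $w(t)$ be a stationary multi-state telegraph-like noise taking values in a finite set $\{w_1,\dots,w_M\}$ of real numbers, with transition-rate matrix $\Gamma$ (so that $\sum_j \Gamma_{jk}=0$ for every $k$) and stationary initial distribution $y(0)$ (a probability vector with $\Gamma y(0)=0$). Let $W=\mathrm{diag}(w_1,\dots,w_M)$. For a dynamical decoupling (DD) sequence of $N\ge 1$ ideal $\pi$ pulses applied at times $\alpha_1 t<\alpha_2 t<\dots<\alpha_N t$ in $(0,t)$, with $0<\alpha_1<\dots<\alpha_N<1$, set $\alpha_0=0$, $\alpha_{N+1}=1$, $a_n=\alpha_n-\alpha_{n-1}$ for $n=1,\dots,N+1$, and require the echo condition $a_1-a_2+a_3-\cdots+(-1)^N a_{N+1}=0$. The qubit coherence (decoherence function) is $$\langle x(t)\rangle=\sum_{j}\Big[e^{[\Gamma+(-1)^N iW]a_{N+1}t}\cdots e^{[\Gamma-iW]a_2 t}\,e^{[\Gamma+iW]a_1 t}\,y(0)\Big]_j .$$ Then, in the short-time limit $t\to 0$, among all DD sequences with the same number $N$ of pulses satisfying the echo condition, the Carr–Purcell–Meiboom–Gill (CPMG) sequence, i.e. $\alpha_n=\frac{2n-1}{2N}$ for $n=1,\dots,N$, is the global minimizer of the decoherence: the coefficient of the leading (third-order) term $t^3$ in the Taylor expansion of $1-\langle x(t)\rangle$ about $t=0$ has minimal absolute value at the CPMG timing.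
   Context: Physical setting: a qubit with Hamiltonian $H=S_z w(t)$ in a random classical field $w(t)$; $x=S_x+iS_y$ is the transverse polarization and $\langle x(t)\rangle$ its ensemble average. The telegraph-like noise jumps randomly among the values $w_j$ with probabilities $Y_j(t)$ obeying $\frac{d}{dt}Y_j=\sum_{j'}\Gamma_{jj'}Y_{j'}$. Ideal instantaneous $\pi$ pulses flip the spin between $+z$ and $-z$, equivalently flip the sign of the field, which yields the stated product-of-exponentials formula for $\langle x(t)\rangle$. *)

theory Defs
  imports "HOL-Analysis.Analysis"
begin

definition mat_pow :: "complex^'m^'m \<Rightarrow> nat \<Rightarrow> complex^'m^'m" where
  "mat_pow A k = ((\<lambda>B. A ** B) ^^ k) (mat 1)"

definition mat_exp :: "complex^'m^'m \<Rightarrow> complex^'m^'m" where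
  "mat_exp A = (\<chi> i j. (\<Sum>k. (mat_pow A k) $ i $ j / fact k))"

definition rate_matrix :: "real^'m^'m \<Rightarrow> bool" where
  "rate_matrix G \<longleftrightarrow> (\<forall>j k. j \<noteq> k \<longrightarrow> G $ j $ k \<ge> 0) \<and> (\<forall>k. (\<Sum>j\<in>UNIV. G $ j $ k) = 0)"

definition stationary_distr :: "real^'m^'m \<Rightarrow> real^'m \<Rightarrow> bool" where
  "stationary_distr G y \<longleftrightarrow> (\<forall>j. y $ j \<ge> 0) \<and> (\<Sum>j\<in>UNIV. y $ j) = 1 \<and> G *v y = 0"

definition alpha_ext :: "nat \<Rightarrow> (nat \<Rightarrow> real) \<Rightarrow> nat \<Rightarrow> real" where
  "alpha_ext N \<alpha> n = (if n = 0 then 0 else if n = N + 1 then 1 else \<alpha> n)"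

definition interval_len :: "nat \<Rightarrow> (nat \<Rightarrow> real) \<Rightarrow> nat \<Rightarrow> real" where
  "interval_len N \<alpha> n = alpha_ext N \<alpha> n - alpha_ext N \<alpha> (n - 1)"

definition DD_seq :: "nat \<Rightarrow> (nat \<Rightarrow> real) \<Rightarrow> bool" where
  "DD_seq N \<alpha> \<longleftrightarrow> 0 < \<alpha> 1 \<and> (\<forall>n. 1 \<le> n \<and> n < N \<longrightarrow> \<alpha> n < \<alpha> (n + 1)) \<and> \<alpha> N < 1
     \<and> (\<Sum>n = 1..N + 1. (-1) ^ (n - 1) * interval_len N \<alpha> n) = 0"

definition CPMG :: "nat \<Rightarrow> nat \<Rightarrow> real" where
  "CPMG N n = (2 * real n - 1) / (2 * real N)"

definition diagW :: "('m \<Rightarrow> real) \<Rightarrow> complex^'m^'m" where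
  "diagW w = (\<chi> i j. if i = j then complex_of_real (w i) else 0)"

fun evol :: "real^'m^'m \<Rightarrow> ('m \<Rightarrow> real) \<Rightarrow> real^'m \<Rightarrow> nat \<Rightarrow> (nat \<Rightarrow> real) \<Rightarrow> complex \<Rightarrow> nat \<Rightarrow> complex^'m" where
  "evol G w y N \<alpha> t 0 = (\<chi> j. complex_of_real (y $ j))"
| "evol G w y N \<alpha> t (Suc n) =
     mat_exp (\<chi> i j. complex_of_real (interval_len N \<alpha> (Suc n)) * t *
                 (complex_of_real (G $ i $ j) + (-1) ^ n * \<i> * diagW w $ i $ j))
       *v evol G w y N \<alpha> t n"

definition coherence :: "real^'m^'m \<Rightarrow> ('m \<Rightarrow> real) \<Rightarrow> real^'m \<Rightarrow> nat \<Rightarrow> (nat \<Rightarrow> real) \<Rightarrow> complex \<Rightarrow> complex" where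
  "coherence G w y N \<alpha> t = (\<Sum>j\<in>UNIV. evol G w y N \<alpha> t (N + 1) $ j)"

definition third_order_coeff :: "real^'m^'m \<Rightarrow> ('m \<Rightarrow> real) \<Rightarrow> real^'m \<Rightarrow> nat \<Rightarrow> (nat \<Rightarrow> real) \<Rightarrow> complex" where
  "third_order_coeff G w y N \<alpha> = (deriv ^^ 3) (\<lambda>t. 1 - coherence G w y N \<alpha> t) 0 / fact 3"

end

theory Submission
  imports Defs
begin

lemma mat_pow_Suc: "mat_pow A (Suc k) = A ** mat_pow A k"
  by (simp add: mat_pow_def)
lemma mat_pow_0: "mat_pow A 0 = mat 1"
  by (simp add: mat_pow_def)

lemma mat_pow_scale:
  "mat_pow (\<chi> i j. t * B$i$j) k = (\<chi> i j. t^k * mat_pow B k $ i $ j)"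
proof (induction k)
  case 0 then show ?case by (simp add: mat_pow_0 vec_eq_iff mat_def)
next
  case (Suc k)
  show ?case unfolding mat_pow_Suc Suc
    by (simp add: vec_eq_iff matrix_matrix_mult_def sum_distrib_left algebra_simps)
qed

lemma mat_pow_bound:
  fixes B :: "complex^'m^'m"
  shows "norm (mat_pow B k $ i $ j) \<le> (\<Sum>a\<in>UNIV. \<Sum>l\<in>UNIV. norm (B$a$l)) ^ k"
proof (induction k arbitrary: i j)
  case 0 then show ?case by (simp add: mat_pow_0 mat_def)
next
  case (Suc k)
  define M where "M = (\<Sum>a\<in>UNIV. \<Sum>l\<in>UNIV. norm (B$a$l))"
  have row: "(\<Sum>l\<in>UNIV. norm (B$i$l)) \<le> M"
    unfolding M_def by (rule member_le_sum) (auto intro: sum_nonneg)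
  have "norm (mat_pow B (Suc k) $ i $ j) = norm (\<Sum>l\<in>UNIV. B$i$l * mat_pow B k $ l $ j)"
    by (simp add: mat_pow_Suc matrix_matrix_mult_def)
  also have "\<dots> \<le> (\<Sum>l\<in>UNIV. norm (B$i$l) * M^k)"
    by (rule order_trans[OF norm_sum], rule sum_mono)
       (simp add: norm_mult mult_left_mono Suc[unfolded M_def[symmetric]])
  also have "\<dots> = (\<Sum>l\<in>UNIV. norm (B$i$l)) * M^k" by (simp add: sum_distrib_right)
  also have "\<dots> \<le> M * M^k"
    by (rule mult_right_mono[OF row]) (simp add: M_def sum_nonneg)
  finally show ?case by (simp add: M_def)
qed

definition Ef :: "complex^'m^'m \<Rightarrow> 'm \<Rightarrow> 'm \<Rightarrow> complex fps" where
  "Ef B i j = Abs_fps (\<lambda>k. mat_pow B k $ i $ j / fact k)"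

lemma Ef_expansion:
  fixes B :: "complex^'m^'m"
  shows "(\<lambda>t. mat_exp (\<chi> i j. t * B$i$j) $ i $ j) has_fps_expansion Ef B i j"
proof -
  define M where "M = (\<Sum>a\<in>UNIV. \<Sum>l\<in>UNIV. norm (B$a$l))"
  have "summable (\<lambda>n. M^n / fact n)" using summable_exp[of M] by (simp add: field_simps)
  hence s: "summable (\<lambda>n. fps_nth (Ef B i j) n * 1 ^ n)"
    apply (rule summable_norm_cancel[OF summable_comparison_test[rotated]])
    using mat_pow_bound[of B _ i j] by (auto simp: Ef_def M_def norm_divide divide_right_mono)
  have "fps_conv_radius (Ef B i j) \<ge> 1"
    unfolding fps_conv_radius_def using conv_radius_geI[OF s] by (simp add: one_ereal_def)
  hence r: "fps_conv_radius (Ef B i j) > 0"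
    by (rule less_le_trans[rotated]) simp
  have "eval_fps (Ef B i j) t = mat_exp (\<chi> i j. t * B$i$j) $ i $ j" for t
  proof -
    have 1: "eval_fps (Ef B i j) t = (\<Sum>n. mat_pow B n $ i $ j / fact n * t^n)"
      by (simp add: eval_fps_def Ef_def)
    have 2: "mat_exp (\<chi> i j. t * B$i$j) $ i $ j = (\<Sum>n. t^n * mat_pow B n $ i $ j / fact n)"
      unfolding mat_exp_def mat_pow_scale vec_lambda_beta ..
    show ?thesis unfolding 1 2 by (rule arg_cong[where f=suminf]) (auto simp: fun_eq_iff)
  qed
  then show ?thesis unfolding has_fps_expansion_def using r by simp
qed

lemma mv_add: "(M::complex^'m^'m) *v (x + y) = M *v x + M *v y"
  by (simp add: vec_eq_iff matrix_vector_mult_def sum.distrib algebra_simps)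
lemma mv_diff: "(M::complex^'m^'m) *v (x - y) = M *v x - M *v y"
  by (simp add: vec_eq_iff matrix_vector_mult_def sum_subtractf algebra_simps)
lemma mv_smult: "(M::complex^'m^'m) *v (c *s x) = c *s (M *v x)"
  by (simp add: vec_eq_iff matrix_vector_mult_def sum_distrib_left algebra_simps)
lemma mv_zero: "(M::complex^'m^'m) *v 0 = 0"
  by (simp add: vec_eq_iff matrix_vector_mult_def)

definition tot :: "complex^'m \<Rightarrow> complex" where "tot v = (\<Sum>j\<in>UNIV. v$j)"
lemma tot_add: "tot (x + y) = tot x + tot y" by (simp add: tot_def sum.distrib)
lemma tot_diff: "tot (x - y) = tot x - tot y" by (simp add: tot_def sum_subtractf)
lemma tot_smult: "tot (c *s x) = c * tot x" by (simp add: tot_def sum_distrib_left)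
lemma tot_zero: "tot 0 = 0" by (simp add: tot_def)

definition Gc :: "real^'m^'m \<Rightarrow> complex^'m^'m" where "Gc G = (\<chi> i j. complex_of_real (G$i$j))"

lemma tot_Gc:
  assumes "rate_matrix G" shows "tot (Gc G *v v) = 0"
proof -
  have "tot (Gc G *v v) = (\<Sum>j\<in>UNIV. (\<Sum>i\<in>UNIV. complex_of_real (G$i$j)) * v$j)"
    unfolding tot_def Gc_def matrix_vector_mult_def
    by (simp add: sum_distrib_right) (rule sum.swap)
  also have "\<dots> = 0" using assms unfolding rate_matrix_def
    by (simp flip: of_real_sum)
  finally show ?thesis .
qed

definition yc :: "real^'m \<Rightarrow> complex^'m" where "yc y = (\<chi> j. complex_of_real (y$j))"

lemma Gc_yc:
  assumes "stationary_distr G y" shows "Gc G *v yc y = 0"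
proof -
  from assms have "G *v y = 0" by (simp add: stationary_distr_def)
  hence "\<And>i. (\<Sum>j\<in>UNIV. G$i$j * y$j) = 0" by (auto simp: vec_eq_iff matrix_vector_mult_def)
  hence "\<And>i. (\<Sum>j\<in>UNIV. complex_of_real (G$i$j) * complex_of_real (y$j)) = 0"
    by (simp flip: of_real_sum of_real_mult)
  thus ?thesis by (simp add: vec_eq_iff matrix_vector_mult_def Gc_def yc_def)
qed

definition Bm :: "real^'m^'m \<Rightarrow> ('m \<Rightarrow> real) \<Rightarrow> nat \<Rightarrow> (nat \<Rightarrow> real) \<Rightarrow> nat \<Rightarrow> complex^'m^'m" where
  "Bm G w N \<alpha> n = (\<chi> i j. complex_of_real (interval_len N \<alpha> n) *
                 (complex_of_real (G $ i $ j) + (-1) ^ (n - 1) * \<i> * diagW w $ i $ j))"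

lemma evol_mat:
  "(\<chi> i j. complex_of_real (interval_len N \<alpha> (Suc n)) * t *
                 (complex_of_real (G $ i $ j) + (-1) ^ n * \<i> * diagW w $ i $ j))
   = (\<chi> i j. t * Bm G w N \<alpha> (Suc n) $ i $ j)"
  by (simp add: vec_eq_iff Bm_def algebra_simps)

lemma Bm_mv:
  "Bm G w N \<alpha> (Suc n) *v v = complex_of_real (interval_len N \<alpha> (Suc n)) *s (Gc G *v v)
     + (complex_of_real (interval_len N \<alpha> (Suc n) * (-1)^n) * \<i>) *s (diagW w *v v)"
  by (simp add: vec_eq_iff Bm_def Gc_def matrix_vector_mult_def sum.distrib sum_distrib_left algebra_simps)

fun Vf :: "real^'m^'m \<Rightarrow> ('m \<Rightarrow> real) \<Rightarrow> real^'m \<Rightarrow> nat \<Rightarrow> (nat \<Rightarrow> real) \<Rightarrow> nat \<Rightarrow> 'm \<Rightarrow> complex fps" where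
  "Vf G w y N \<alpha> 0 j = fps_const (complex_of_real (y$j))"
| "Vf G w y N \<alpha> (Suc n) j = (\<Sum>k\<in>UNIV. Ef (Bm G w N \<alpha> (Suc n)) j k * Vf G w y N \<alpha> n k)"

lemma Vf_expansion:
  "(\<lambda>t. evol G w y N \<alpha> t n $ j) has_fps_expansion Vf G w y N \<alpha> n j"
proof (induction n arbitrary: j)
  case 0 then show ?case by simp
next
  case (Suc n)
  show ?case
    unfolding evol.simps Vf.simps evol_mat matrix_vector_mult_def vec_lambda_beta
    by (intro has_fps_expansion_sum has_fps_expansion_mult Ef_expansion Suc)
qed

definition vk :: "real^'m^'m \<Rightarrow> ('m \<Rightarrow> real) \<Rightarrow> real^'m \<Rightarrow> nat \<Rightarrow> (nat \<Rightarrow> real) \<Rightarrow> nat \<Rightarrow> nat \<Rightarrow> complex^'m" where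
  "vk G w y N \<alpha> n p = (\<chi> j. fps_nth (Vf G w y N \<alpha> n j) p)"

lemma vk_Suc:
  "vk G w y N \<alpha> (Suc n) p = (\<Sum>i=0..p. (1 / fact i) *s (mat_pow (Bm G w N \<alpha> (Suc n)) i *v vk G w y N \<alpha> n (p - i)))"
  apply (simp add: vec_eq_iff vk_def fps_sum_nth fps_mult_nth Ef_def matrix_vector_mult_def sum_distrib_left)
  apply (subst sum.swap)
  apply (simp add: algebra_simps)
  done

lemma step_lemma:
  fixes Gm Wm :: "complex^'m^'m" and y0 v1 v2 v3 :: "complex^'m" and a s S R Q :: real
  assumes Gy: "Gm *v y0 = 0" and Gt: "\<And>v. tot (Gm *v v) = 0"
    and B: "\<And>v. Bop v = complex_of_real a *s (Gm *v v) + (complex_of_real (a * s) * \<i>) *s (Wm *v v)"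
    and s: "s = 1 \<or> s = -1"
    and v1: "v1 = (\<i> * complex_of_real S) *s (Wm *v y0)"
    and v2: "v2 = (\<i> * complex_of_real R) *s (Gm *v (Wm *v y0)) - complex_of_real (S^2/2) *s (Wm *v (Wm *v y0))"
    and v3: "tot v3 = - c * complex_of_real (S * R - Q) - \<i> * m3 * complex_of_real (S^3/6)"
    and c: "c = tot (Wm *v (Gm *v (Wm *v y0)))"
    and m3: "m3 = tot (Wm *v (Wm *v (Wm *v y0)))"
  shows "v1 + Bop y0 = (\<i> * complex_of_real (S + s * a)) *s (Wm *v y0)"
    and "v2 + Bop v1 + (1/2) *s Bop (Bop y0) =
         (\<i> * complex_of_real (R + a * S + s * a^2/2)) *s (Gm *v (Wm *v y0))
            - complex_of_real ((S + s * a)^2/2) *s (Wm *v (Wm *v y0))"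
    and "tot (v3 + Bop v2 + (1/2) *s Bop (Bop v1) + (1/6) *s Bop (Bop (Bop y0))) =
         - c * complex_of_real ((S + s * a)*(R + a * S + s * a^2/2) - (Q + a * S^2 + s * a^2*S + a^3/3))
           - \<i> * m3 * complex_of_real ((S + s * a)^3/6)"
proof -
  note lin = B mv_add mv_diff mv_smult mv_zero Gy tot_add tot_diff tot_smult tot_zero Gt
  show "v1 + Bop y0 = (\<i> * complex_of_real (S + s * a)) *s (Wm *v y0)"
    using s by (auto simp: lin v1 vec_eq_iff algebra_simps)
  show "v2 + Bop v1 + (1/2) *s Bop (Bop y0) =
         (\<i> * complex_of_real (R + a * S + s * a^2/2)) *s (Gm *v (Wm *v y0))
            - complex_of_real ((S + s * a)^2/2) *s (Wm *v (Wm *v y0))"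
    using s by (auto simp: lin v1 v2 vec_eq_iff algebra_simps power2_eq_square)
  show "tot (v3 + Bop v2 + (1/2) *s Bop (Bop v1) + (1/6) *s Bop (Bop (Bop y0))) =
         - c * complex_of_real ((S + s * a)*(R + a * S + s * a^2/2) - (Q + a * S^2 + s * a^2*S + a^3/3))
           - \<i> * m3 * complex_of_real ((S + s * a)^3/6)"
    using s apply (simp add: lin v1 v2 v3 c[symmetric] m3[symmetric])
    apply (elim disjE)
     apply (simp_all add: field_simps power2_eq_square power3_eq_cube)
    done
qed

lemma mpv: "mat_pow B (Suc k) *v v = B *v (mat_pow B k *v v)"
  by (simp add: mat_pow_Suc matrix_vector_mul_assoc)

lemma vk_Suc_expl:
  fixes G :: "real^'m^'m"
  shows "vk G w y N \<alpha> (Suc n) 0 = vk G w y N \<alpha> n 0"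
    and "vk G w y N \<alpha> (Suc n) 1 = vk G w y N \<alpha> n 1 + Bm G w N \<alpha> (Suc n) *v vk G w y N \<alpha> n 0"
    and "vk G w y N \<alpha> (Suc n) 2 = vk G w y N \<alpha> n 2 + Bm G w N \<alpha> (Suc n) *v vk G w y N \<alpha> n 1
          + (1/2) *s (Bm G w N \<alpha> (Suc n) *v (Bm G w N \<alpha> (Suc n) *v vk G w y N \<alpha> n 0))"
    and "vk G w y N \<alpha> (Suc n) 3 = vk G w y N \<alpha> n 3 + Bm G w N \<alpha> (Suc n) *v vk G w y N \<alpha> n 2
          + (1/2) *s (Bm G w N \<alpha> (Suc n) *v (Bm G w N \<alpha> (Suc n) *v vk G w y N \<alpha> n 1))
          + (1/6) *s (Bm G w N \<alpha> (Suc n) *v (Bm G w N \<alpha> (Suc n) *v (Bm G w N \<alpha> (Suc n) *v vk G w y N \<alpha> n 0)))"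
  unfolding vk_Suc
  by (simp_all add: numeral_3_eq_3 numeral_2_eq_2 mpv mat_pow_0 vec_eq_iff)

fun Sf :: "nat \<Rightarrow> (nat \<Rightarrow> real) \<Rightarrow> nat \<Rightarrow> real" where
  "Sf N \<alpha> 0 = 0"
| "Sf N \<alpha> (Suc n) = Sf N \<alpha> n + (-1)^n * interval_len N \<alpha> (Suc n)"
fun Rf :: "nat \<Rightarrow> (nat \<Rightarrow> real) \<Rightarrow> nat \<Rightarrow> real" where
  "Rf N \<alpha> 0 = 0"
| "Rf N \<alpha> (Suc n) = Rf N \<alpha> n + interval_len N \<alpha> (Suc n) * Sf N \<alpha> n + (-1)^n * interval_len N \<alpha> (Suc n)^2/2"
fun Qf :: "nat \<Rightarrow> (nat \<Rightarrow> real) \<Rightarrow> nat \<Rightarrow> real" where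
  "Qf N \<alpha> 0 = 0"
| "Qf N \<alpha> (Suc n) = Qf N \<alpha> n + interval_len N \<alpha> (Suc n) * Sf N \<alpha> n ^ 2
     + (-1)^n * interval_len N \<alpha> (Suc n)^2 * Sf N \<alpha> n + interval_len N \<alpha> (Suc n)^3/3"

lemma closed_form:
  fixes G :: "real^'m^'m" and w :: "'m \<Rightarrow> real" and y :: "real^'m"
  assumes rm: "rate_matrix G" and st: "stationary_distr G y"
  defines "u \<equiv> diagW w *v yc y"
  defines "c \<equiv> tot (diagW w *v (Gc G *v u))"
  defines "m3 \<equiv> tot (diagW w *v (diagW w *v u))"
  shows "vk G w y N \<alpha> n 0 = yc y
    \<and> vk G w y N \<alpha> n 1 = (\<i> * complex_of_real (Sf N \<alpha> n)) *s u
    \<and> vk G w y N \<alpha> n 2 = (\<i> * complex_of_real (Rf N \<alpha> n)) *s (Gc G *v u)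
          - complex_of_real (Sf N \<alpha> n ^ 2 / 2) *s (diagW w *v u)
    \<and> tot (vk G w y N \<alpha> n 3) = - c * complex_of_real (Sf N \<alpha> n * Rf N \<alpha> n - Qf N \<alpha> n)
          - \<i> * m3 * complex_of_real (Sf N \<alpha> n ^ 3 / 6)"
proof (induction n)
  case 0
  have "vk G w y N \<alpha> 0 p = (if p = 0 then yc y else 0)" for p
    by (simp add: vk_def yc_def vec_eq_iff)
  then show ?case by (simp add: tot_zero)
next
  case (Suc n)
  have s: "(-1::real)^n = 1 \<or> (-1::real)^n = -1"
    by (cases "even n") auto
  note IH = Suc[THEN conjunct1] Suc[THEN conjunct2, THEN conjunct1]
    Suc[THEN conjunct2, THEN conjunct2, THEN conjunct1] Suc[THEN conjunct2, THEN conjunct2, THEN conjunct2]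
  note SL = step_lemma[OF Gc_yc[OF st] tot_Gc[OF rm] Bm_mv s IH(2)[unfolded u_def] IH(3)[unfolded u_def]
     IH(4)[unfolded u_def c_def m3_def] refl refl]
  show ?case
    unfolding vk_Suc_expl IH(1) Sf.simps Rf.simps Qf.simps
    using SL by (simp add: u_def c_def m3_def)
qed

lemma Sf_sum: "Sf N \<alpha> n = (\<Sum>k=1..n. (-1)^(k-1) * interval_len N \<alpha> k)"
  by (induction n) auto

lemma coeff_formula:
  fixes G :: "real^'m^'m" and w :: "'m \<Rightarrow> real" and y :: "real^'m"
  assumes rm: "rate_matrix G" and st: "stationary_distr G y"
    and echo: "(\<Sum>n = 1..N + 1. (-1) ^ (n - 1) * interval_len N \<alpha> n) = 0"
  shows "third_order_coeff G w y N \<alpha> =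
     - tot (diagW w *v (Gc G *v (diagW w *v yc y))) * complex_of_real (Qf N \<alpha> (N+1))"
proof -
  have exp: "(\<lambda>t. 1 - coherence G w y N \<alpha> t) has_fps_expansion (1 - (\<Sum>j\<in>UNIV. Vf G w y N \<alpha> (N+1) j))"
    unfolding coherence_def
    by (intro has_fps_expansion_diff has_fps_expansion_1 has_fps_expansion_sum Vf_expansion)
  have "third_order_coeff G w y N \<alpha> = fps_nth (1 - (\<Sum>j\<in>UNIV. Vf G w y N \<alpha> (N+1) j)) 3"
    unfolding third_order_coeff_def using fps_nth_fps_expansion[OF exp, of 3] by simp
  also have "\<dots> = - tot (vk G w y N \<alpha> (N+1) 3)"
    by (simp add: fps_sum_nth tot_def vk_def)
  also have "\<dots> = - tot (diagW w *v (Gc G *v (diagW w *v yc y))) * complex_of_real (Qf N \<alpha> (N+1))"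
  proof -
    have S0: "Sf N \<alpha> (N+1) = 0" using echo by (simp add: Sf_sum)
    have T: "tot (vk G w y N \<alpha> (N+1) 3) = - tot (diagW w *v (Gc G *v (diagW w *v yc y))) *
        complex_of_real (Sf N \<alpha> (N+1) * Rf N \<alpha> (N+1) - Qf N \<alpha> (N+1))
        - \<i> * tot (diagW w *v (diagW w *v (diagW w *v yc y))) * complex_of_real (Sf N \<alpha> (N+1) ^ 3 / 6)"
      using closed_form[OF rm st, of w N \<alpha> "N+1"] by blast
    show ?thesis unfolding T S0 by (simp del: Qf.simps Sf.simps Rf.simps)
  qed
  finally show ?thesis .
qed

lemma len_sum: "(\<Sum>k=1..n. interval_len N \<alpha> k) = alpha_ext N \<alpha> n"
  by (induction n) (auto simp: interval_len_def alpha_ext_def)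

lemma len_Suc: "alpha_ext N \<alpha> (Suc k) = alpha_ext N \<alpha> k + interval_len N \<alpha> (Suc k)"
  by (simp add: interval_len_def)

lemma DD_pos:
  assumes dd: "DD_seq N \<alpha>" and N: "N \<ge> 1" and k: "1 \<le> k" "k \<le> N + 1"
  shows "interval_len N \<alpha> k > 0"
proof -
  from dd have a1: "0 < \<alpha> 1" and mono: "\<And>n. 1 \<le> n \<Longrightarrow> n < N \<Longrightarrow> \<alpha> n < \<alpha> (n + 1)"
    and aN: "\<alpha> N < 1" unfolding DD_seq_def by auto
  consider "k = 1" | "k = N + 1" | "2 \<le> k" "k \<le> N" using k N by linarith
  then show ?thesis
  proof cases
    case 1 then show ?thesis using a1 N by (simp add: interval_len_def alpha_ext_def)
  next
    case 2 then show ?thesis using aN N by (simp add: interval_len_def alpha_ext_def)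
  next
    case 3
    have "\<alpha> (k - 1) < \<alpha> (k - 1 + 1)" using mono[of "k-1"] 3 by simp
    then show ?thesis using 3 by (auto simp: interval_len_def alpha_ext_def)
  qed
qed

lemma cubic1:
  fixes a x :: real assumes "a \<ge> 0" "x \<ge> 0"
  shows "a^3/12 \<ge> a*x^2/4 - x^3/6"
proof -
  have "a^3/12 - (a*x^2/4 - x^3/6) = (a + 2*x)*(a - x)^2/12"
    by (simp add: field_simps power2_eq_square power3_eq_cube)
  also have "\<dots> \<ge> 0" using assms by simp
  finally show ?thesis by simp
qed

lemma cubic2:
  fixes a x :: real assumes "a \<ge> 0" "x \<ge> 0"
  shows "a^3/3 \<ge> a*x^2/4 - x^3/12"
proof -
  have "a^3/3 - (a*x^2/4 - x^3/12) = (2*a + 2*x)*(2*a - x)^2/24"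
    by (simp add: field_simps power2_eq_square power3_eq_cube)
  also have "\<dots> \<ge> 0" using assms by simp
  finally show ?thesis by simp
qed

lemma middle:
  fixes a S s :: real assumes "a \<ge> 0" "s = 1 \<or> s = -1"
  shows "a * S^2 + s * a^2 * S + a^3/3 \<ge> a^3/12"
proof -
  have "a * S^2 + s * a^2 * S + a^3/3 - a^3/12 = a * (S + s*a/2)^2"
    using assms(2) by (elim disjE) (simp_all add: field_simps power2_eq_square power3_eq_cube)
  also have "\<dots> \<ge> 0" using assms by simp
  finally show ?thesis by simp
qed

lemma Q_lower_aux:
  assumes dd: "DD_seq N \<alpha>" and N: "N \<ge> 1"
  shows "1 \<le> k \<Longrightarrow> k \<le> N \<Longrightarrow> Qf N \<alpha> k \<ge> alpha_ext N \<alpha> k * (1/N)^2/4 - (real k - 1) * (1/N)^3/6 - (1/N)^3/12"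
proof (induction k)
  case 0 then show ?case by simp
next
  case (Suc k)
  define a where "a = interval_len N \<alpha> (Suc k)"
  have apos: "a \<ge> 0" using DD_pos[OF dd N, of "Suc k"] Suc.prems by (simp add: a_def)
  have x: "(1/real N) \<ge> 0" by simp
  have s: "(-1::real)^k = 1 \<or> (-1::real)^k = -1" by (cases "even k") auto
  show ?case
  proof (cases "k = 0")
    case True
    have "Qf N \<alpha> (Suc k) = a^3/3" using True by (simp add: a_def)
    moreover have "alpha_ext N \<alpha> (Suc k) = a" using True by (simp add: a_def interval_len_def alpha_ext_def)
    ultimately show ?thesis using cubic2[OF apos x] True by simp
  next
    case False
    have IH: "Qf N \<alpha> k \<ge> alpha_ext N \<alpha> k * (1/N)^2/4 - (real k - 1) * (1/N)^3/6 - (1/N)^3/12"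
      using Suc False by simp
    have m: "a * Sf N \<alpha> k ^ 2 + (-1)^k * a^2 * Sf N \<alpha> k + a^3/3 \<ge> a^3/12"
      using middle[OF apos s, of "Sf N \<alpha> k"] by simp
    have qq: "Qf N \<alpha> (Suc k) = Qf N \<alpha> k + (a * Sf N \<alpha> k ^ 2 + (-1)^k * a^2 * Sf N \<alpha> k + a^3/3)"
      by (simp add: a_def)
    have "Qf N \<alpha> (Suc k) \<ge> Qf N \<alpha> k + a^3/12" using m qq by linarith
    moreover have "alpha_ext N \<alpha> (Suc k) = alpha_ext N \<alpha> k + a" by (simp add: a_def len_Suc)
    have E: "alpha_ext N \<alpha> (Suc k) = alpha_ext N \<alpha> k + a" by (simp add: a_def len_Suc)
    have e1': "\<And>X::real. alpha_ext N \<alpha> (Suc k) * X/4 = alpha_ext N \<alpha> k * X/4 + a * X/4"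
      unfolding E by (simp add: field_simps)
    have e2': "\<And>z::real. (real (Suc k) - 1) * z/6 = (real k - 1) * z/6 + z/6"
      by (simp add: field_simps)
    note e1 = e1'[of "(1/N)^2"] and e2 = e2'[of "(1/N)^3"]
    show ?thesis unfolding e1 e2 using IH cubic1[OF apos x] \<open>Qf N \<alpha> (Suc k) \<ge> Qf N \<alpha> k + a^3/12\<close> by linarith
  qed
qed

lemma Q_lower:
  assumes dd: "DD_seq N \<alpha>" and N: "N \<ge> 1"
  shows "Qf N \<alpha> (N+1) \<ge> 1 / (12 * real N^2)"
proof -
  define a where "a = interval_len N \<alpha> (Suc N)"
  have apos: "a \<ge> 0" using DD_pos[OF dd N, of "Suc N"] by (simp add: a_def)
  have x: "(1/real N) \<ge> 0" by simp
  have S0: "Sf N \<alpha> (N+1) = 0" using dd by (simp add: Sf_sum DD_seq_def del: Sf.simps)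
  hence SN: "Sf N \<alpha> N = -((-1)^N * a)" by (simp add: a_def)
  have s2: "((-1::real)^N)^2 = 1" by (simp flip: power_mult)
  have q: "Qf N \<alpha> (N+1) = Qf N \<alpha> N + a^3/3"
    using s2 by (simp add: a_def[symmetric] SN power2_eq_square power3_eq_cube algebra_simps)
  have ext: "alpha_ext N \<alpha> N + a = 1"
    using len_Suc[of N \<alpha> N] N by (simp add: a_def alpha_ext_def)
  have IH: "Qf N \<alpha> N \<ge> alpha_ext N \<alpha> N * (1/N)^2/4 - (real N - 1) * (1/N)^3/6 - (1/N)^3/12"
    using Q_lower_aux[OF dd N, of N] N by simp
  have e: "(1/real N)^2/4 - (real N - 1) * (1/N)^3/6 - (1/N)^3/6 = 1 / (12 * real N^2)"
    using N by (simp add: field_simps power2_eq_square power3_eq_cube)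
  have "Qf N \<alpha> (N+1) \<ge> (alpha_ext N \<alpha> N + a) * (1/N)^2/4 - (real N - 1) * (1/N)^3/6 - (1/N)^3/6"
    using IH q cubic2[OF apos x] by (simp add: algebra_simps)
  then show ?thesis using ext e by simp
qed

lemma sgn_pair:
  assumes "k \<ge> 1"
  shows "((-1::real)^k = 1 \<and> (-1::real)^(k-1) = -1) \<or> ((-1::real)^k = -1 \<and> (-1::real)^(k-1) = 1)"
proof -
  obtain j where k: "k = Suc j" using assms by (cases k) auto
  show ?thesis unfolding k by (cases "even j") auto
qed

lemma cpmg_len:
  assumes N: "N \<ge> 1" and k: "1 \<le> k" "k \<le> N + 1"
  shows "interval_len N (CPMG N) k = (if k = 1 \<or> k = N + 1 then 1/(2*real N) else 1/real N)"
proof -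
  consider "k = 1" | "k = N + 1" | "2 \<le> k" "k \<le> N" using k N by linarith
  then show ?thesis
  proof cases
    case 1 then show ?thesis using N by (simp add: interval_len_def alpha_ext_def CPMG_def)
  next
    case 2 then show ?thesis using N by (simp add: interval_len_def alpha_ext_def CPMG_def field_simps)
  next
    case 3
    have r: "real (k - 1) = real k - 1" using 3 by simp
    show ?thesis using 3 N by (auto simp: interval_len_def alpha_ext_def CPMG_def r field_simps)
  qed
qed

lemma cpmg_SQ:
  assumes N: "N \<ge> 1"
  shows "1 \<le> k \<Longrightarrow> k \<le> N \<Longrightarrow> Sf N (CPMG N) k = (-1)^(k-1) / (2*real N)
     \<and> Qf N (CPMG N) k = 1/(24*real N^3) + (real k - 1)/(12*real N^3)"
proof (induction k)
  case 0 then show ?case by simp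
next
  case (Suc k)
  show ?case
  proof (cases "k = 0")
    case True
    have a1: "interval_len N (CPMG N) (Suc 0) = 1/(2*real N)" using cpmg_len[OF N, of 1] N by simp
    have "Qf N (CPMG N) (Suc k) = (1/(2*real N))^3/3" "Sf N (CPMG N) (Suc k) = 1/(2*real N)"
      using True by (simp_all add: a1)
    then show ?thesis using True N by (simp add: power3_eq_cube field_simps)
  next
    case False
    have IH: "Sf N (CPMG N) k = (-1)^(k-1) / (2*real N)"
      "Qf N (CPMG N) k = 1/(24*real N^3) + (real k - 1)/(12*real N^3)" using Suc False by auto
    have a: "interval_len N (CPMG N) (Suc k) = 1/real N" using cpmg_len[OF N, of "Suc k"] Suc.prems False by simp
    have k1: "k \<ge> 1" using False by simp
    from sgn_pair[OF k1] show ?thesis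
      using N by (auto simp: IH a power2_eq_square power3_eq_cube field_simps)
  qed
qed

lemma cpmg_DD:
  assumes N: "N \<ge> 1" shows "DD_seq N (CPMG N)"
proof -
  have SN: "Sf N (CPMG N) N = (-1)^(N-1) / (2*real N)" using cpmg_SQ[OF N, of N] N by simp
  have a: "interval_len N (CPMG N) (Suc N) = 1/(2*real N)" using cpmg_len[OF N, of "Suc N"] by simp
  have "Sf N (CPMG N) (N+1) = 0"
    using sgn_pair[OF N] by (auto simp: SN a)
  hence echo: "(\<Sum>n = 1..N + 1. (-1) ^ (n - 1) * interval_len N (CPMG N) n) = 0"
    by (simp add: Sf_sum del: Sf.simps)
  show ?thesis unfolding DD_seq_def
    using N echo by (auto simp: CPMG_def field_simps)
qed

lemma cpmg_Q:
  assumes N: "N \<ge> 1" shows "Qf N (CPMG N) (N+1) = 1 / (12 * real N^2)"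
proof -
  have SQ: "Sf N (CPMG N) N = (-1)^(N-1) / (2*real N)"
      "Qf N (CPMG N) N = 1/(24*real N^3) + (real N - 1)/(12*real N^3)" using cpmg_SQ[OF N, of N] N by auto
  have a: "interval_len N (CPMG N) (Suc N) = 1/(2*real N)" using cpmg_len[OF N, of "Suc N"] by simp
  from sgn_pair[OF N] show ?thesis
    using N by (auto simp: SQ a power2_eq_square power3_eq_cube field_simps)
qed

lemma cmod_aux:
  fixes q1 q2 :: real
  shows "0 \<le> q1 \<Longrightarrow> q1 \<le> q2 \<Longrightarrow> cmod (- c * complex_of_real q1) \<le> cmod (- c * complex_of_real q2)"
  by (simp add: norm_mult mult_left_mono)

theorem theorem1:
  fixes G :: "real^'m^'m" and w :: "'m \<Rightarrow> real" and y0 :: "real^'m" and N :: nat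
  assumes "rate_matrix G"
    and "stationary_distr G y0"
    and "N \<ge> 1"
  shows "DD_seq N (CPMG N) \<and>
    (\<forall>\<alpha>. DD_seq N \<alpha> \<longrightarrow>
       cmod (third_order_coeff G w y0 N (CPMG N)) \<le> cmod (third_order_coeff G w y0 N \<alpha>))"
proof (intro conjI allI impI)
  show dd: "DD_seq N (CPMG N)" using cpmg_DD[OF assms(3)] .
  fix \<alpha> assume da: "DD_seq N \<alpha>"
  define c where "c = tot (diagW w *v (Gc G *v (diagW w *v yc y0)))"
  have f1: "third_order_coeff G w y0 N (CPMG N) = - c * complex_of_real (Qf N (CPMG N) (N+1))"
    using coeff_formula[OF assms(1,2)] dd by (simp add: DD_seq_def c_def)
  have f2: "third_order_coeff G w y0 N \<alpha> = - c * complex_of_real (Qf N \<alpha> (N+1))"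
    using coeff_formula[OF assms(1,2)] da by (simp add: DD_seq_def c_def)
  have q1: "Qf N (CPMG N) (N+1) = 1 / (12 * real N^2)" using cpmg_Q[OF assms(3)] .
  have q2: "Qf N \<alpha> (N+1) \<ge> 1 / (12 * real N^2)" using Q_lower[OF da assms(3)] .
  have p: "0 \<le> 1 / (12 * real N^2)" by simp
  show "cmod (third_order_coeff G w y0 N (CPMG N)) \<le> cmod (third_order_coeff G w y0 N \<alpha>)"
    unfolding f1 f2 by (rule cmod_aux) (use q1 q2 p in linarith)+
qed

end
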